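(* For every measurable space $X$ define $\lambda_X:\mathbb DFX\to F\mathbb DX$ by $$\lambda_X=\big\langle g\circ\mathbb D\pi^{1}_X,\ g\circ\mathbb D\pi^{*}_X,\ a\mapsto\mathbb D\pi^a_X\big\rangle,$$ where $g:\mathbb D\mathbb I\to\mathbb I$, $g(m)=\int_{\mathbb I}\mathrm{id}_{\mathbb I}\,dm$. Then each $\lambda_X$ is measurable, and for every measurable $f:X\to Y$: $\lambda_Y\circ\mathbb DFf=F\mathbb Df\circ\lambda_X$; $\lambda_X\circ\eta_{FX}=F\eta_X$; and $F\mu_X\circ\lambda_{\mathbb DX}\circ\mathbb D\lambda_X=\lambda_X\circ\mu_{FX}$. Consequently $\lambda:\mathbb DF\Rightarrow F\mathbb D$ is a distributive law of the monad $\mathbb D$ over the functor $F$.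
   Context: Work in $\mathbf{Meas}$. $\mathbb I=[0,1]$ with its Borel $\sigma$-algebra; $A$ a finite alphabet. For a measurable space $(X,\Sigma_X)$, $\mathbb DX$ is the set of sub-probability measures on $X$ with the $\sigma$-algebra generated by the maps $e^X_S(m)=m(S)$, $S\in\Sigma_X$; $\mathbb Df(m)=m\circ f^{-1}$; the sub-Giry monad $(\mathbb D,\eta,\mu)$ has $\eta_X(x)(S)=\mathbf 1_S(x)$ and $\mu_X(\Phi)(S)=\int_{\mathbb DX}e^X_S\,d\Phi$. The functor $F$ is $FX=\mathbb I\times\mathbb I\times X^A$ with the product $\sigma$-algebra and $Ff=\mathrm{id}_{\mathbb I}\times\mathrm{id}_{\mathbb I}\times f^A$. We write $\mathrm{id}_{FX}=\langle\pi^1_X,\pi^*_X,a\mapsto\pi^a_X\rangle$, i.e. $\pi^1_X,\pi^*_X:FX\to\mathbb I$ are the first two projections and $\pi^a_X:FX\to X$ is the projection onto the $a$-component. A distributive law is a natural transformation $\lambda:\mathbb DF\Rightarrow F\mathbb D$ with $\lambda_X\circ\eta_{FX}=F\eta_X$ and $\lambda_X\circ\mu_{FX}=F\mu_X\circ\lambda_{\mathbb DX}\circ\mathbb D\lambda_X$. *)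

theory Defs
  imports "HOL-Probability.Probability"
begin

definition unitI :: "real measure" where
  "unitI = restrict_space borel {0..1}"

text \<open>The functor F X = I x I x X^A (product sigma-algebra); the finite alphabet A is
  the finite type 'a, and X^A is the product space over all letters.\<close>
definition FM :: "'x measure \<Rightarrow> (real \<times> real \<times> ('a::finite \<Rightarrow> 'x)) measure" where
  "FM X = unitI \<Otimes>\<^sub>M (unitI \<Otimes>\<^sub>M (\<Pi>\<^sub>M a\<in>UNIV. X))"

definition Fmap :: "('x \<Rightarrow> 'y) \<Rightarrow> real \<times> real \<times> ('a \<Rightarrow> 'x) \<Rightarrow> real \<times> real \<times> ('a \<Rightarrow> 'y)" where
  "Fmap f = (\<lambda>(r, s, h). (r, s, \<lambda>a. f (h a)))"

text \<open>Action of the sub-Giry functor D on maps: pushforward (D f)(m) = m o f^{-1},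
  landing in D Y.  The sub-Giry space D X is subprob_algebra X, the unit is return,
  the multiplication is join.\<close>
definition Dmap :: "'y measure \<Rightarrow> ('x \<Rightarrow> 'y) \<Rightarrow> 'x measure \<Rightarrow> 'y measure" where
  "Dmap Y f m = distr m Y f"

definition gI :: "real measure \<Rightarrow> real" where
  "gI m = (\<integral>x. x \<partial>m)"

definition lam :: "'x measure \<Rightarrow> (real \<times> real \<times> ('a::finite \<Rightarrow> 'x)) measure
                    \<Rightarrow> real \<times> real \<times> ('a \<Rightarrow> 'x measure)" where
  "lam X \<Phi> = (gI (Dmap unitI fst \<Phi>),
              gI (Dmap unitI (\<lambda>p. fst (snd p)) \<Phi>),
              \<lambda>a. Dmap X (\<lambda>p. snd (snd p) a) \<Phi>)"

end

theory Submission
  imports Defs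
begin

lemma space_unitI[simp]: "space unitI = {0..1}"
  by (simp add: unitI_def space_restrict_space)

lemma id_unitI[measurable]: "(\<lambda>x. x) \<in> borel_measurable unitI"
  unfolding unitI_def by (rule measurable_restrict_space1) simp

lemma meas_fst[measurable]: "fst \<in> FM X \<rightarrow>\<^sub>M unitI"
  unfolding FM_def by measurable

lemma meas_fst_snd[measurable]: "(\<lambda>p. fst (snd p)) \<in> FM X \<rightarrow>\<^sub>M unitI"
  unfolding FM_def by measurable

lemma meas_comp[measurable]: "(\<lambda>p. snd (snd p) a) \<in> (FM X :: (real \<times> real \<times> ('a::finite \<Rightarrow> 'x)) measure) \<rightarrow>\<^sub>M X"
  unfolding FM_def by measurable

lemma gI_range:
  assumes "m \<in> space (subprob_algebra unitI)"
  shows "gI m \<in> {0..1}"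
proof -
  have sp: "subprob_space m" and se: "sets m = sets unitI"
    using assms by (auto simp: space_subprob_algebra)
  have spm: "space m = {0..1}" using sets_eq_imp_space_eq[OF se] by simp
  interpret subprob_space m by (rule sp)
  have int: "integrable m (\<lambda>x. x)"
    by (rule integrable_const_bound[where B=1]) (auto simp: spm measurable_cong_sets[OF se refl])
  have "0 \<le> gI m" unfolding gI_def by (rule integral_nonneg_AE) (rule AE_I2, simp add: spm)
  moreover have "gI m \<le> (\<integral>x. (1::real) \<partial>m)" unfolding gI_def
    by (rule integral_mono[OF int]) (auto simp: spm)
  moreover have "(\<integral>x. (1::real) \<partial>m) \<le> 1" using subprob_measure_le_1[of "space m"] by simp
  ultimately show ?thesis by simp
qed

lemma gI_meas[measurable]: "gI \<in> subprob_algebra unitI \<rightarrow>\<^sub>M unitI"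
proof -
  have "gI \<in> subprob_algebra unitI \<rightarrow>\<^sub>M borel" unfolding gI_def by measurable
  then show ?thesis unfolding unitI_def
    by (intro measurable_restrict_space2) (use gI_range in \<open>auto simp: unitI_def[symmetric]\<close>)
qed

lemma distr_meas[measurable]: "f \<in> M \<rightarrow>\<^sub>M N \<Longrightarrow> (\<lambda>M'. distr M' N f) \<in> subprob_algebra M \<rightarrow>\<^sub>M subprob_algebra N"
  by (rule measurable_distr)

lemma lam_meas: "lam X \<in> subprob_algebra (FM X :: (real \<times> real \<times> ('a::finite \<Rightarrow> 'x)) measure)
                  \<rightarrow>\<^sub>M (FM (subprob_algebra X) :: (real \<times> real \<times> ('a \<Rightarrow> 'x measure)) measure)"
proof -
  have [measurable]: "(\<lambda>\<Phi>. gI (distr \<Phi> unitI fst)) \<in> subprob_algebra (FM X :: (real \<times> real \<times> ('a::finite \<Rightarrow> 'x)) measure) \<rightarrow>\<^sub>M unitI"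
    by (rule measurable_compose[OF measurable_distr[OF meas_fst] gI_meas])
  have [measurable]: "(\<lambda>\<Phi>. gI (distr \<Phi> unitI (\<lambda>p. fst (snd p)))) \<in> subprob_algebra (FM X :: (real \<times> real \<times> ('a::finite \<Rightarrow> 'x)) measure) \<rightarrow>\<^sub>M unitI"
    by (rule measurable_compose[OF measurable_distr[OF meas_fst_snd] gI_meas])
  have [measurable]: "(\<lambda>\<Phi>. distr \<Phi> X (\<lambda>p. snd (snd p) a)) \<in> subprob_algebra (FM X :: (real \<times> real \<times> ('a::finite \<Rightarrow> 'x)) measure) \<rightarrow>\<^sub>M subprob_algebra X" for a
    by (rule measurable_distr[OF meas_comp])
  have p: "(\<lambda>\<Phi> a. distr \<Phi> X (\<lambda>p. snd (snd p) a)) \<in> subprob_algebra (FM X :: (real \<times> real \<times> ('a::finite \<Rightarrow> 'x)) measure) \<rightarrow>\<^sub>M (\<Pi>\<^sub>M a\<in>UNIV. subprob_algebra X)"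
    by (rule measurable_PiM_single'[where f="\<lambda>a \<Phi>. distr \<Phi> X (\<lambda>p. snd (snd p) a)"])
       (auto intro: measurable_space[OF measurable_distr[OF meas_comp]])
  show ?thesis unfolding lam_def Dmap_def
    unfolding FM_def[of "subprob_algebra X"]
    by (intro measurable_Pair p) simp_all
qed

lemma Fmap_meas: "f \<in> X \<rightarrow>\<^sub>M Y \<Longrightarrow> Fmap f \<in> (FM X :: (real \<times> real \<times> ('a::finite \<Rightarrow> 'x)) measure) \<rightarrow>\<^sub>M (FM Y :: (real \<times> real \<times> ('a \<Rightarrow> 'y)) measure)"
proof -
  assume f: "f \<in> X \<rightarrow>\<^sub>M Y"
  have p: "(\<lambda>x a. f (snd (snd x) a)) \<in> (FM X :: (real \<times> real \<times> ('a::finite \<Rightarrow> 'x)) measure) \<rightarrow>\<^sub>M (\<Pi>\<^sub>M a\<in>UNIV. Y)"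
    by (rule measurable_PiM_single'[where f="\<lambda>a x. f (snd (snd x) a)"])
       (auto intro: measurable_compose[OF meas_comp f] measurable_space[OF measurable_compose[OF meas_comp f]])
  show ?thesis unfolding Fmap_def split_beta' unfolding FM_def[of Y]
    by (intro measurable_Pair p) (simp_all add: meas_fst meas_fst_snd)
qed

lemma gI_distr:
  assumes "\<Phi> \<in> space (subprob_algebra M)" "\<pi> \<in> M \<rightarrow>\<^sub>M unitI"
  shows "gI (distr \<Phi> unitI \<pi>) = (\<integral>x. \<pi> x \<partial>\<Phi>)"
proof -
  have se: "sets \<Phi> = sets M" using assms(1) by (auto simp: space_subprob_algebra)
  have "\<pi> \<in> \<Phi> \<rightarrow>\<^sub>M unitI" using assms(2) measurable_cong_sets[OF se refl, of unitI] by simp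
  then show ?thesis unfolding gI_def by (simp add: integral_distr[OF _ id_unitI])
qed

lemma mult_comp:
  assumes Psi: "\<Psi> \<in> space (subprob_algebra (subprob_algebra M))"
    and pi: "\<pi> \<in> M \<rightarrow>\<^sub>M unitI" and rho: "\<rho> \<in> N \<rightarrow>\<^sub>M unitI"
    and h: "h \<in> subprob_algebra M \<rightarrow>\<^sub>M N"
    and eq: "\<And>\<Phi>. \<Phi> \<in> space (subprob_algebra M) \<Longrightarrow> \<rho> (h \<Phi>) = gI (distr \<Phi> unitI \<pi>)"
  shows "gI (distr (distr \<Psi> N h) unitI \<rho>) = gI (distr (join \<Psi>) unitI \<pi>)"
proof -
  have se: "sets \<Psi> = sets (subprob_algebra M)" and sp: "subprob_space \<Psi>"
    using Psi by (auto simp: space_subprob_algebra)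
  have spc: "space \<Psi> = space (subprob_algebra M)" using sets_eq_imp_space_eq[OF se] .
  have h': "h \<in> \<Psi> \<rightarrow>\<^sub>M N" using h measurable_cong_sets[OF se refl, of N] by simp
  have rb: "(\<lambda>x. \<rho> x) \<in> borel_measurable N" using measurable_compose[OF rho id_unitI] by simp
  have pb: "\<pi> \<in> borel_measurable M" using measurable_compose[OF pi id_unitI] by simp
  have "gI (distr (distr \<Psi> N h) unitI \<rho>) = (\<integral>x. \<rho> x \<partial>distr \<Psi> N h)"
  proof -
    have "\<rho> \<in> distr \<Psi> N h \<rightarrow>\<^sub>M unitI" using rho by simp
    then show ?thesis unfolding gI_def by (simp add: integral_distr[OF _ id_unitI])
  qed
  also have "\<dots> = (\<integral>\<Phi>. \<rho> (h \<Phi>) \<partial>\<Psi>)"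
    by (simp add: integral_distr[OF h' rb])
  also have "\<dots> = (\<integral>\<Phi>. (\<integral>x. \<pi> x \<partial>\<Phi>) \<partial>\<Psi>)"
    by (rule Bochner_Integration.integral_cong[OF refl]) (simp add: spc eq gI_distr pi)
  also have "\<dots> = (\<integral>x. \<pi> x \<partial>join \<Psi>)"
  proof (rule integral_join[symmetric, where B=1 and B'=1, OF pb _ se])
    show "\<And>x. x \<in> space M \<Longrightarrow> \<bar>\<pi> x\<bar> \<le> 1" using measurable_space[OF pi] by auto
    show "finite_measure \<Psi>" using sp by (simp add: subprob_space_def)
    show "AE M' in \<Psi>. emeasure M' (space M') \<le> ennreal 1"
      by (rule AE_I2) (auto simp: spc space_subprob_algebra dest: subprob_space.emeasure_space_le_1)
  qed
  also have "\<dots> = gI (distr (join \<Psi>) unitI \<pi>)"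
    by (rule gI_distr[symmetric, OF measurable_space[OF measurable_join Psi] pi])
  finally show ?thesis .
qed

theorem mainTheorem6:
  fixes X :: "'x measure"
  shows "lam X \<in> subprob_algebra (FM X :: (real \<times> real \<times> ('a::finite \<Rightarrow> 'x)) measure)
                  \<rightarrow>\<^sub>M (FM (subprob_algebra X) :: (real \<times> real \<times> ('a \<Rightarrow> 'x measure)) measure)
    \<and> (\<forall>(Y :: 'y measure) f. f \<in> X \<rightarrow>\<^sub>M Y \<longrightarrow>
         (\<forall>\<Phi> \<in> space (subprob_algebra (FM X :: (real \<times> real \<times> ('a \<Rightarrow> 'x)) measure)).
           lam Y (Dmap (FM Y :: (real \<times> real \<times> ('a \<Rightarrow> 'y)) measure) (Fmap f) \<Phi>)
             = Fmap (Dmap Y f) (lam X \<Phi>)))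
    \<and> (\<forall>x \<in> space (FM X :: (real \<times> real \<times> ('a \<Rightarrow> 'x)) measure).
           lam X (return (FM X :: (real \<times> real \<times> ('a \<Rightarrow> 'x)) measure) x) = Fmap (return X) x)
    \<and> (\<forall>\<Psi> \<in> space (subprob_algebra (subprob_algebra (FM X :: (real \<times> real \<times> ('a \<Rightarrow> 'x)) measure))).
           Fmap join (lam (subprob_algebra X)
               (Dmap (FM (subprob_algebra X) :: (real \<times> real \<times> ('a \<Rightarrow> 'x measure)) measure) (lam X) \<Psi>))
             = lam X (join \<Psi>))"
proof (intro conjI ballI allI impI)
  show "lam X \<in> subprob_algebra (FM X :: (real \<times> real \<times> ('a::finite \<Rightarrow> 'x)) measure)
                  \<rightarrow>\<^sub>M (FM (subprob_algebra X) :: (real \<times> real \<times> ('a \<Rightarrow> 'x measure)) measure)"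
    by (rule lam_meas)
next
  fix Y :: "'y measure" and f \<Phi>
  assume f: "f \<in> X \<rightarrow>\<^sub>M Y" and Phi: "\<Phi> \<in> space (subprob_algebra (FM X :: (real \<times> real \<times> ('a \<Rightarrow> 'x)) measure))"
  have se: "sets \<Phi> = sets (FM X :: (real \<times> real \<times> ('a \<Rightarrow> 'x)) measure)" using Phi by (auto simp: space_subprob_algebra)
  have F: "Fmap f \<in> \<Phi> \<rightarrow>\<^sub>M (FM Y :: (real \<times> real \<times> ('a \<Rightarrow> 'y)) measure)"
    using Fmap_meas[OF f] measurable_cong_sets[OF se refl, of "FM Y :: (real \<times> real \<times> ('a \<Rightarrow> 'y)) measure"] by simp
  have c: "(\<lambda>p. snd (snd p) a) \<in> \<Phi> \<rightarrow>\<^sub>M X" for a :: 'a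
    using meas_comp[of a X] measurable_cong_sets[OF se refl, of X] by simp
  have e1: "fst \<circ> Fmap f = fst" "(\<lambda>p. fst (snd p)) \<circ> Fmap f = (\<lambda>p. fst (snd p))"
    "(\<lambda>p. snd (snd p) a) \<circ> Fmap f = f \<circ> (\<lambda>p. snd (snd p) a)" for a :: 'a
    by (auto simp: Fmap_def split_beta')
  show "lam Y (Dmap (FM Y :: (real \<times> real \<times> ('a \<Rightarrow> 'y)) measure) (Fmap f) \<Phi>) = Fmap (Dmap Y f) (lam X \<Phi>)"
  proof -
    have d1: "distr (distr \<Phi> (FM Y :: (real \<times> real \<times> ('a \<Rightarrow> 'y)) measure) (Fmap f)) unitI fst = distr \<Phi> unitI fst"
      by (simp add: distr_distr[OF meas_fst F] e1)
    have d2: "distr (distr \<Phi> (FM Y :: (real \<times> real \<times> ('a \<Rightarrow> 'y)) measure) (Fmap f)) unitI (\<lambda>p. fst (snd p)) = distr \<Phi> unitI (\<lambda>p. fst (snd p))"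
      by (simp add: distr_distr[OF meas_fst_snd F] e1)
    have d3: "distr (distr \<Phi> (FM Y :: (real \<times> real \<times> ('a \<Rightarrow> 'y)) measure) (Fmap f)) Y (\<lambda>p. snd (snd p) a) = distr (distr \<Phi> X (\<lambda>p. snd (snd p) a)) Y f" for a
      by (simp add: distr_distr[OF meas_comp F] distr_distr[OF f c] e1)
    show ?thesis unfolding lam_def Dmap_def d1 d2 d3 by (simp add: Fmap_def)
  qed
next
  fix x assume x: "x \<in> space (FM X :: (real \<times> real \<times> ('a \<Rightarrow> 'x)) measure)"
  have u: "fst x \<in> space unitI" "fst (snd x) \<in> space unitI"
    using measurable_space[OF meas_fst x] measurable_space[OF meas_fst_snd x] by auto
  show "lam X (return (FM X :: (real \<times> real \<times> ('a \<Rightarrow> 'x)) measure) x) = Fmap (return X) x"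
    unfolding lam_def Dmap_def gI_def
    by (simp add: distr_return[OF meas_fst x] distr_return[OF meas_fst_snd x] distr_return[OF meas_comp x]
          integral_return[OF u(1) id_unitI] integral_return[OF u(2) id_unitI] Fmap_def split_beta')
next
  fix \<Psi> assume Psi: "\<Psi> \<in> space (subprob_algebra (subprob_algebra (FM X :: (real \<times> real \<times> ('a \<Rightarrow> 'x)) measure)))"
  have se: "sets \<Psi> = sets (subprob_algebra (FM X :: (real \<times> real \<times> ('a \<Rightarrow> 'x)) measure))"
    using Psi by (auto simp: space_subprob_algebra)
  have L: "lam X \<in> \<Psi> \<rightarrow>\<^sub>M (FM (subprob_algebra X) :: (real \<times> real \<times> ('a \<Rightarrow> 'x measure)) measure)"
    using lam_meas measurable_cong_sets[OF se refl, of "FM (subprob_algebra X) :: (real \<times> real \<times> ('a \<Rightarrow> 'x measure)) measure"] by simp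
  have m1: "gI (distr (distr \<Psi> (FM (subprob_algebra X) :: (real \<times> real \<times> ('a \<Rightarrow> 'x measure)) measure) (lam X)) unitI fst)
      = gI (distr (join \<Psi>) unitI fst)"
    by (rule mult_comp[OF Psi meas_fst meas_fst lam_meas]) (simp add: lam_def Dmap_def)
  have m2: "gI (distr (distr \<Psi> (FM (subprob_algebra X) :: (real \<times> real \<times> ('a \<Rightarrow> 'x measure)) measure) (lam X)) unitI (\<lambda>p. fst (snd p)))
      = gI (distr (join \<Psi>) unitI (\<lambda>p. fst (snd p)))"
    by (rule mult_comp[OF Psi meas_fst_snd meas_fst_snd lam_meas]) (simp add: lam_def Dmap_def)
  have m3: "join (distr (distr \<Psi> (FM (subprob_algebra X) :: (real \<times> real \<times> ('a \<Rightarrow> 'x measure)) measure) (lam X)) (subprob_algebra X) (\<lambda>p. snd (snd p) a))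
      = distr (join \<Psi>) X (\<lambda>p. snd (snd p) a)" for a :: 'a
  proof -
    have "distr (distr \<Psi> (FM (subprob_algebra X) :: (real \<times> real \<times> ('a \<Rightarrow> 'x measure)) measure) (lam X)) (subprob_algebra X) (\<lambda>p. snd (snd p) a)
        = distr \<Psi> (subprob_algebra X) ((\<lambda>p. snd (snd p) a) \<circ> lam X)"
      by (rule distr_distr[OF meas_comp L])
    also have "(\<lambda>p. snd (snd p) a) \<circ> lam X = (\<lambda>\<Phi>. distr \<Phi> X (\<lambda>p. snd (snd p) a))"
      by (auto simp: lam_def Dmap_def)
    finally show ?thesis using join_distr_distr[OF se meas_comp] by simp
  qed
  show "Fmap join (lam (subprob_algebra X)
               (Dmap (FM (subprob_algebra X) :: (real \<times> real \<times> ('a \<Rightarrow> 'x measure)) measure) (lam X) \<Psi>))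
             = lam X (join \<Psi>)"
    unfolding Fmap_def
    by (simp add: lam_def[of "subprob_algebra X"] lam_def[of X "join \<Psi>"] Dmap_def m1 m2 m3)
qed

end
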